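(* Let $0<t\le k<n$ be such that a Steiner system $S(t,k,n)$ exists. Then $$q'_0(t,k,n)\le \frac{\binom{n-1}{t-1}}{\binom{k-1}{t-1}}+1,\qquad q''_0(t,k,n)\le \frac{\binom{n}{t}}{\binom{k}{t}}-\frac{\binom{n-1}{t-1}}{\binom{k-1}{t-1}}+1.$$
   Context: $\mathbb{Z}_q=\{0,\dots,q-1\}$ (an alphabet); $\mathrm{wt}$ = number of nonzero coordinates; $d$ = Hamming distance; $J_q(n,w)$ = weight-$w$ words of $\mathbb{Z}_q^n$. An $(n,w,d)_q$ code of size $M$ is a subset $C\subseteq J_q(n,w)$ with $|C|=M$ and pairwise distances at least $d$. A Steiner system $S(t,k,n)$ is a pair $(N,B)$, $|N|=n$, $B$ a set of $k$-subsets (blocks) of $N$ with every $t$-subset of $N$ in exactly one block. For $t,k,n$ such that an $S(t,k,n)$ exists: $q'_0(t,k,n)$ is the smallest $q$ for which an $(n,k,2k-t+1)_q$ code of size $\binom{n}{t}/\binom{k}{t}$ exists, and $q''_0(t,k,n)$ is the smallest $q$ for which an $(n,n-k,n-t+1)_q$ code of size $\binom{n}{t}/\binom{k}{t}$ exists. *)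

theory Defs
  imports Complex_Main
begin

text \<open>Words of Z_q^n: functions x :: nat => nat with x i < q for i < n and
 x i = 0 for i >= n (canonical representation of length-n words).\<close>

definition words :: "nat \<Rightarrow> nat \<Rightarrow> (nat \<Rightarrow> nat) set" where
  "words q n = {x. (\<forall>i<n. x i < q) \<and> (\<forall>i\<ge>n. x i = 0)}"

definition wt :: "nat \<Rightarrow> (nat \<Rightarrow> nat) \<Rightarrow> nat" where
  "wt n x = card {i. i < n \<and> x i \<noteq> 0}"

definition hdist :: "nat \<Rightarrow> (nat \<Rightarrow> nat) \<Rightarrow> (nat \<Rightarrow> nat) \<Rightarrow> nat" where
  "hdist n x y = card {i. i < n \<and> x i \<noteq> y i}"

definition J :: "nat \<Rightarrow> nat \<Rightarrow> nat \<Rightarrow> (nat \<Rightarrow> nat) set" where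
  "J q n w = {x \<in> words q n. wt n x = w}"

definition is_code :: "nat \<Rightarrow> nat \<Rightarrow> nat \<Rightarrow> nat \<Rightarrow> nat \<Rightarrow> (nat \<Rightarrow> nat) set \<Rightarrow> bool" where
  "is_code n w d q M C \<longleftrightarrow> C \<subseteq> J q n w \<and> finite C \<and> card C = M \<and>
     (\<forall>x\<in>C. \<forall>y\<in>C. x \<noteq> y \<longrightarrow> hdist n x y \<ge> d)"

definition steiner_system :: "nat \<Rightarrow> nat \<Rightarrow> nat \<Rightarrow> 'a set \<Rightarrow> 'a set set \<Rightarrow> bool" where
  "steiner_system t k n N B \<longleftrightarrow> finite N \<and> card N = n \<and>
     (\<forall>b\<in>B. b \<subseteq> N \<and> card b = k) \<and>
     (\<forall>T. T \<subseteq> N \<and> card T = t \<longrightarrow> (\<exists>!b. b \<in> B \<and> T \<subseteq> b))"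

definition steiner_exists :: "nat \<Rightarrow> nat \<Rightarrow> nat \<Rightarrow> bool" where
  "steiner_exists t k n \<longleftrightarrow> (\<exists>(N::nat set) B. steiner_system t k n N B)"

text \<open>Steiner size binom(n,t)/binom(k,t) (an integer when S(t,k,n) exists).\<close>
definition steiner_size :: "nat \<Rightarrow> nat \<Rightarrow> nat \<Rightarrow> nat" where
  "steiner_size t k n = (n choose t) div (k choose t)"

definition q0' :: "nat \<Rightarrow> nat \<Rightarrow> nat \<Rightarrow> nat" where
  "q0' t k n = (LEAST q. \<exists>C. is_code n k (2*k - t + 1) q (steiner_size t k n) C)"

definition q0'' :: "nat \<Rightarrow> nat \<Rightarrow> nat \<Rightarrow> nat" where
  "q0'' t k n = (LEAST q. \<exists>C. is_code n (n - k) (n - t + 1) q (steiner_size t k n) C)"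

end

theory Submission
  imports Defs
begin

lemma ex1_uniq: "\<exists>!x. P x \<Longrightarrow> P a \<Longrightarrow> P b \<Longrightarrow> a = b" by blast

lemma count_partition:
  assumes M: "finite M" and F: "\<forall>b\<in>F. b \<subseteq> M \<and> card b = m"
    and U: "\<forall>T. T \<subseteq> M \<and> card T = s \<longrightarrow> (\<exists>!b. b \<in> F \<and> T \<subseteq> b)"
  shows "card F * (m choose s) = card M choose s"
proof -
  have "F \<subseteq> Pow M" using F by blast
  then have fF: "finite F" using M by (simp add: finite_subset)
  have eq: "{T. T \<subseteq> M \<and> card T = s} = (\<Union>b\<in>F. {T. T \<subseteq> b \<and> card T = s})"
  proof (rule set_eqI, rule iffI)
    fix T assume T: "T \<in> {T. T \<subseteq> M \<and> card T = s}"
    then have "\<exists>!b. b \<in> F \<and> T \<subseteq> b" using U by simp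
    then obtain b where "b \<in> F \<and> T \<subseteq> b" by (rule ex1E)
    then show "T \<in> (\<Union>b\<in>F. {T. T \<subseteq> b \<and> card T = s})" using T by blast
  next
    fix T assume "T \<in> (\<Union>b\<in>F. {T. T \<subseteq> b \<and> card T = s})"
    then obtain b where "b \<in> F" "T \<subseteq> b" "card T = s" by blast
    then show "T \<in> {T. T \<subseteq> M \<and> card T = s}" using F by auto
  qed
  have "card (\<Union>b\<in>F. {T. T \<subseteq> b \<and> card T = s}) = (\<Sum>b\<in>F. card {T. T \<subseteq> b \<and> card T = s})"
  proof (rule card_UN_disjoint[OF fF])
    show "\<forall>i\<in>F. finite {T. T \<subseteq> i \<and> card T = s}"
    proof
      fix i assume "i \<in> F"
      then have "i \<subseteq> M" using F by blast
      then have "finite i" using M by (rule finite_subset)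
      then have "finite (Pow i)" by simp
      moreover have "{T. T \<subseteq> i \<and> card T = s} \<subseteq> Pow i" by auto
      ultimately show "finite {T. T \<subseteq> i \<and> card T = s}" by (rule finite_subset[rotated])
    qed
    show "\<forall>i\<in>F. \<forall>j\<in>F. i \<noteq> j \<longrightarrow> {T. T \<subseteq> i \<and> card T = s} \<inter> {T. T \<subseteq> j \<and> card T = s} = {}"
    proof (intro ballI impI)
      fix i j assume ij: "i \<in> F" "j \<in> F" "i \<noteq> j"
      show "{T. T \<subseteq> i \<and> card T = s} \<inter> {T. T \<subseteq> j \<and> card T = s} = {}"
      proof (rule ccontr)
        assume "\<not> ?thesis"
        then obtain T where T: "T \<subseteq> i" "T \<subseteq> j" "card T = s" by blast
        then have "T \<subseteq> M" using F ij by blast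
        then have "\<exists>!b. b \<in> F \<and> T \<subseteq> b" using U T by simp
        then have "i = j" by (rule ex1_uniq) (use ij T in simp_all)
        then show False using ij by simp
      qed
    qed
  qed
  also have "\<dots> = (\<Sum>b\<in>F. m choose s)"
  proof (rule sum.cong[OF refl])
    fix b assume "b \<in> F"
    then have "b \<subseteq> M" "card b = m" using F by auto
    then have "finite b" "card b = m" using M finite_subset by auto
    then show "card {T. T \<subseteq> b \<and> card T = s} = m choose s" using n_subsets[of b s] by simp
  qed
  also have "\<dots> = card F * (m choose s)" by simp
  finally show ?thesis using eq n_subsets[OF M, of s] by simp
qed

lemma card_bij_pred:
  fixes n :: nat
  assumes fb: "bij_betw f {0..<n} N"
  shows "card {i. i < n \<and> Q (f i)} = card {p\<in>N. Q p}"
proof -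
  have im: "f ` {0..<n} = N" and inj: "inj_on f {0..<n}" using fb by (simp_all add: bij_betw_def)
  have "{p\<in>N. Q p} = f ` {i. i < n \<and> Q (f i)}" using im by auto
  moreover have "inj_on f {i. i < n \<and> Q (f i)}"
    by (rule inj_on_subset[OF inj]) auto
  ultimately show ?thesis by (simp add: card_image)
qed

lemma code_gen:
  fixes n :: nat and f :: "nat \<Rightarrow> 'a"
  assumes fbij: "bij_betw f {0..<n} N"
    and inj: "\<And>p. p \<in> N \<Longrightarrow> inj_on (H p) {b\<in>B. P p b}"
    and rng: "\<And>p b. p\<in>N \<Longrightarrow> b\<in>B \<Longrightarrow> P p b \<Longrightarrow> H p b < m"
    and wt: "\<And>b. b\<in>B \<Longrightarrow> card {p\<in>N. P p b} = w"
    and dist: "\<And>b1 b2. b1\<in>B \<Longrightarrow> b2\<in>B \<Longrightarrow> b1\<noteq>b2 \<Longrightarrow> card {p\<in>N. P p b1 \<or> P p b2} \<ge> d"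
    and d0: "d > 0" and fB: "finite B"
  shows "is_code n w d (Suc m) (card B) ((\<lambda>b i. if i<n \<and> P (f i) b then Suc (H (f i) b) else 0) ` B)"
proof -
  define c where "c = (\<lambda>b i. if i<n \<and> P (f i) b then Suc (H (f i) b) else 0)"
  have fN: "f i \<in> N" if "i < n" for i using bij_betwE[OF fbij] that by simp
  have hd: "hdist n (c b1) (c b2) \<ge> d" if b: "b1\<in>B" "b2\<in>B" "b1\<noteq>b2" for b1 b2
  proof -
    have "{i. i < n \<and> c b1 i \<noteq> c b2 i} = {i. i < n \<and> (P (f i) b1 \<or> P (f i) b2)}"
    proof (rule set_eqI)
      fix i
      show "i \<in> {i. i < n \<and> c b1 i \<noteq> c b2 i} \<longleftrightarrow> i \<in> {i. i < n \<and> (P (f i) b1 \<or> P (f i) b2)}"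
      proof (cases "i < n \<and> P (f i) b1 \<and> P (f i) b2")
        case True
        then have "H (f i) b1 \<noteq> H (f i) b2" using inj[OF fN] b unfolding inj_on_def by blast
        then show ?thesis using True by (simp add: c_def)
      next
        case False
        then show ?thesis by (auto simp: c_def)
      qed
    qed
    then show ?thesis using dist[OF b] card_bij_pred[OF fbij, of "\<lambda>p. P p b1 \<or> P p b2"] unfolding hdist_def by simp
  qed
  have inj_c: "inj_on c B"
  proof (rule inj_onI, rule ccontr)
    fix b1 b2 assume "b1 \<in> B" "b2 \<in> B" "c b1 = c b2" "b1 \<noteq> b2"
    then show False using hd[of b1 b2] d0 unfolding hdist_def by simp
  qed
  have J: "c b \<in> J (Suc m) n w" if b: "b \<in> B" for b
  proof -
    have "c b \<in> words (Suc m) n"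
      unfolding words_def c_def using rng[OF fN b] by auto
    moreover have "{i. i < n \<and> c b i \<noteq> 0} = {i. i < n \<and> P (f i) b}"
      by (auto simp: c_def)
    then have "wt n (c b) = w" unfolding wt_def using card_bij_pred[OF fbij, of "\<lambda>p. P p b"] wt[OF b] by simp
    ultimately show ?thesis unfolding J_def by simp
  qed
  show ?thesis
    unfolding is_code_def c_def[symmetric]
  proof (intro conjI)
    show "c ` B \<subseteq> J (Suc m) n w" using J by blast
    show "finite (c ` B)" using fB by simp
    show "card (c ` B) = card B" using inj_c by (rule card_image)
    show "\<forall>x\<in>c ` B. \<forall>y\<in>c ` B. x \<noteq> y \<longrightarrow> d \<le> hdist n x y" using hd by blast
  qed
qed


lemma label_exists:
  assumes "\<And>p. finite (A p)"
  shows "\<exists>H. \<forall>p. inj_on (H p) (A p) \<and> (\<forall>a\<in>A p. H p a < card (A p))"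
proof -
  have "\<forall>p. \<exists>h::_\<Rightarrow>nat. inj_on h (A p) \<and> (\<forall>a\<in>A p. h a < card (A p))"
  proof
    fix p
    obtain h where "bij_betw h (A p) {0..<card (A p)}" using ex_bij_betw_finite_nat[OF assms] by blast
    then show "\<exists>h::_\<Rightarrow>nat. inj_on h (A p) \<and> (\<forall>a\<in>A p. h a < card (A p))"
      by (intro exI[of _ h]) (auto simp: bij_betw_def)
  qed
  then show ?thesis by (rule choice)
qed

lemma least_le_real:
  assumes "\<exists>C. is_code n w d q M C"
  shows "(LEAST q. \<exists>C. is_code n w d q M C) \<le> q"
  using assms by (rule Least_le)

theorem mainTheorem7:
  fixes t k n :: nat
  assumes "0 < t" "t \<le> k" "k < n" "steiner_exists t k n"
  shows "(\<exists>q C. is_code n k (2*k - t + 1) q (steiner_size t k n) C) \<and>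
         real (q0' t k n) \<le> real (n - 1 choose (t - 1)) / real (k - 1 choose (t - 1)) + 1 \<and>
         (\<exists>q C. is_code n (n - k) (n - t + 1) q (steiner_size t k n) C) \<and>
         real (q0'' t k n) \<le> real (n choose t) / real (k choose t)
              - real (n - 1 choose (t - 1)) / real (k - 1 choose (t - 1)) + 1"
proof -
  obtain N :: "nat set" and B where S: "steiner_system t k n N B"
    using assms(4) unfolding steiner_exists_def by blast
  have fN: "finite N" and cN: "card N = n" and Bs: "\<forall>b\<in>B. b \<subseteq> N \<and> card b = k"
    and U: "\<forall>T. T \<subseteq> N \<and> card T = t \<longrightarrow> (\<exists>!b. b \<in> B \<and> T \<subseteq> b)"
    using S unfolding steiner_system_def by auto
  have "B \<subseteq> Pow N" using Bs by blast
  then have fB: "finite B" using fN by (simp add: finite_subset)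
  have kt0: "k choose t > 0" using assms(2) by simp
  have kt1: "k - 1 choose (t - 1) > 0" using assms(1,2) by simp
  have hb: "card B * (k choose t) = n choose t"
    using count_partition[OF fN Bs U] cN by simp
  have ss: "steiner_size t k n = card B"
    unfolding steiner_size_def using hb[symmetric] kt0 by simp
  define r where "r = (n - 1 choose (t - 1)) div (k - 1 choose (t - 1))"
  have rx0: "card {b\<in>B. x \<in> b} * (k - 1 choose (t - 1)) = n - 1 choose (t - 1)" if x: "x \<in> N" for x
  proof -
    define F where "F = (\<lambda>b. b - {x}) ` {b\<in>B. x \<in> b}"
    have injF: "inj_on (\<lambda>b. b - {x}) {b\<in>B. x \<in> b}"
    proof (rule inj_onI)
      fix b1 b2 assume "b1 \<in> {b\<in>B. x \<in> b}" "b2 \<in> {b\<in>B. x \<in> b}" "b1 - {x} = b2 - {x}"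
      then show "b1 = b2" by (metis insert_Diff mem_Collect_eq)
    qed
    have cF: "card F = card {b\<in>B. x \<in> b}" unfolding F_def using injF by (rule card_image)
    have fM: "finite (N - {x})" using fN by simp
    have FM: "\<forall>b\<in>F. b \<subseteq> N - {x} \<and> card b = k - 1"
    proof
      fix b' assume "b' \<in> F"
      then obtain b where b: "b \<in> B" "x \<in> b" "b' = b - {x}" unfolding F_def by blast
      then have "b \<subseteq> N" "card b = k" using Bs by auto
      moreover have "finite b" using \<open>b \<subseteq> N\<close> fN finite_subset by auto
      ultimately show "b' \<subseteq> N - {x} \<and> card b' = k - 1" using b by auto
    qed
    have UF: "\<forall>T. T \<subseteq> N - {x} \<and> card T = t - 1 \<longrightarrow> (\<exists>!b. b \<in> F \<and> T \<subseteq> b)"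
    proof (intro allI impI)
      fix T assume T: "T \<subseteq> N - {x} \<and> card T = t - 1"
      have fT: "finite T" using T fN finite_subset by blast
      have "x \<notin> T" using T by blast
      then have "card (insert x T) = t" using fT T assms(1) by simp
      moreover have "insert x T \<subseteq> N" using T x by blast
      ultimately have E: "\<exists>!b. b \<in> B \<and> insert x T \<subseteq> b" using mp[OF spec[OF U, of "insert x T"]] by blast
      then obtain b where b: "b \<in> B" "insert x T \<subseteq> b" by blast
      show "\<exists>!b. b \<in> F \<and> T \<subseteq> b"
      proof (rule ex1I[of _ "b - {x}"])
        show "b - {x} \<in> F \<and> T \<subseteq> b - {x}" unfolding F_def using b \<open>x \<notin> T\<close> by blast
      next
        fix b' assume "b' \<in> F \<and> T \<subseteq> b'"
        then obtain b2 where b2: "b2 \<in> B" "x \<in> b2" "b' = b2 - {x}" "T \<subseteq> b2 - {x}" unfolding F_def by blast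
        then have "insert x T \<subseteq> b2" by blast
        then have "b2 = b" using ex1_uniq[OF E] b b2 by blast
        then show "b' = b - {x}" using b2 by simp
      qed
    qed
    have "card F * (k - 1 choose (t - 1)) = card (N - {x}) choose (t - 1)"
      by (rule count_partition[OF fM FM UF])
    then show "card {b\<in>B. x \<in> b} * (k - 1 choose (t - 1)) = n - 1 choose (t - 1)"
      using cF cN x fN by simp
  qed
  have rx: "card {b\<in>B. x \<in> b} = r" if x: "x \<in> N" for x
    unfolding r_def using kt1 rx0[OF x] by (metis nonzero_mult_div_cancel_right less_not_refl2)
  have rr: "real r = real (n - 1 choose (t - 1)) / real (k - 1 choose (t - 1))"
  proof -
    have "N \<noteq> {}" using cN assms by auto
    then obtain x where "x \<in> N" by blast
    have "r * (k - 1 choose (t - 1)) = n - 1 choose (t - 1)" using rx[OF \<open>x \<in> N\<close>] rx0[OF \<open>x \<in> N\<close>]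
      by simp
    then have "real r * real (k - 1 choose (t - 1)) = real (n - 1 choose (t - 1))"
      by (metis of_nat_mult)
    then show ?thesis using kt1 by (simp add: field_simps)
  qed
  have int_lt: "card (b1 \<inter> b2) < t" if b: "b1 \<in> B" "b2 \<in> B" "b1 \<noteq> b2" for b1 b2
  proof (rule ccontr)
    assume "\<not> card (b1 \<inter> b2) < t"
    then obtain T where T: "T \<subseteq> b1 \<inter> b2" "card T = t" by (meson not_less obtain_subset_with_card_n)
    then have "T \<subseteq> N" using Bs b by blast
    then have E: "\<exists>!b. b \<in> B \<and> T \<subseteq> b" using mp[OF spec[OF U, of T]] T by blast
    have "b1 = b2" using ex1_uniq[OF E] b T by blast
    then show False using b by simp
  qed
  have fb: "finite b" if "b \<in> B" for b using that Bs fN finite_subset by blast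
  obtain f where f: "bij_betw f {0..<n} N" using ex_bij_betw_nat_finite[OF fN] cN by blast
  have fBx: "\<And>p. finite {b\<in>B. p \<in> b}" and fBn: "\<And>p. finite {b\<in>B. p \<notin> b}" using fB by auto
  obtain H1 where H1: "\<forall>p. inj_on (H1 p) {b\<in>B. p \<in> b} \<and> (\<forall>a\<in>{b\<in>B. p \<in> b}. H1 p a < card {b\<in>B. p \<in> b})"
    using label_exists[of "\<lambda>p. {b\<in>B. p \<in> b}", OF fBx] by blast
  obtain H2 where H2: "\<forall>p. inj_on (H2 p) {b\<in>B. p \<notin> b} \<and> (\<forall>a\<in>{b\<in>B. p \<notin> b}. H2 p a < card {b\<in>B. p \<notin> b})"
    using label_exists[of "\<lambda>p. {b\<in>B. p \<notin> b}", OF fBn] by blast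
  have cBn: "card {b\<in>B. p \<notin> b} = card B - r" if p: "p \<in> N" for p
  proof -
    have "{b\<in>B. p \<notin> b} = B - {b\<in>B. p \<in> b}" by blast
    then show ?thesis using card_Diff_subset[of "{b\<in>B. p \<in> b}" B] fBx rx[OF p] by auto
  qed
  have code1: "is_code n k (2*k - t + 1) (Suc r) (card B)
      ((\<lambda>b i. if i<n \<and> f i \<in> b then Suc (H1 (f i) b) else 0) ` B)"
  proof (rule code_gen[OF f, where P="\<lambda>p b. p \<in> b"])
    show "\<And>p. p \<in> N \<Longrightarrow> inj_on (H1 p) {b \<in> B. p \<in> b}" using H1 by blast
    show "\<And>p b. p \<in> N \<Longrightarrow> b \<in> B \<Longrightarrow> p \<in> b \<Longrightarrow> H1 p b < r" using H1 rx by fastforce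
    show "\<And>b. b \<in> B \<Longrightarrow> card {p \<in> N. p \<in> b} = k"
    proof -
      fix b assume "b \<in> B"
      then have "{p \<in> N. p \<in> b} = b" "card b = k" using Bs by auto
      then show "card {p \<in> N. p \<in> b} = k" by simp
    qed
    show "\<And>b1 b2. b1 \<in> B \<Longrightarrow> b2 \<in> B \<Longrightarrow> b1 \<noteq> b2 \<Longrightarrow> 2 * k - t + 1 \<le> card {p \<in> N. p \<in> b1 \<or> p \<in> b2}"
    proof -
      fix b1 b2 assume b: "b1 \<in> B" "b2 \<in> B" "b1 \<noteq> b2"
      have "{p \<in> N. p \<in> b1 \<or> p \<in> b2} = b1 \<union> b2" using Bs b by auto
      moreover have "card (b1 \<union> b2) + card (b1 \<inter> b2) = card b1 + card b2"
        using card_Un_Int[OF fb[OF b(1)] fb[OF b(2)]] by simp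
      moreover have "card b1 = k" "card b2 = k" using Bs b by auto
      ultimately show "2 * k - t + 1 \<le> card {p \<in> N. p \<in> b1 \<or> p \<in> b2}" using int_lt[OF b] assms(2) by simp
    qed
    show "0 < 2 * k - t + 1" by simp
    show "finite B" by (rule fB)
  qed
  have code2: "is_code n (n - k) (n - t + 1) (Suc (card B - r)) (card B)
      ((\<lambda>b i. if i<n \<and> f i \<notin> b then Suc (H2 (f i) b) else 0) ` B)"
  proof (rule code_gen[OF f, where P="\<lambda>p b. p \<notin> b"])
    show "\<And>p. p \<in> N \<Longrightarrow> inj_on (H2 p) {b \<in> B. p \<notin> b}" using H2 by blast
    show "\<And>p b. p \<in> N \<Longrightarrow> b \<in> B \<Longrightarrow> p \<notin> b \<Longrightarrow> H2 p b < card B - r" using H2 cBn by fastforce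
    show "\<And>b. b \<in> B \<Longrightarrow> card {p \<in> N. p \<notin> b} = n - k"
    proof -
      fix b assume b: "b \<in> B"
      then have "{p \<in> N. p \<notin> b} = N - b" "card b = k" "b \<subseteq> N" using Bs by auto
      then show "card {p \<in> N. p \<notin> b} = n - k" using card_Diff_subset[OF fb[OF b]] cN by simp
    qed
    show "\<And>b1 b2. b1 \<in> B \<Longrightarrow> b2 \<in> B \<Longrightarrow> b1 \<noteq> b2 \<Longrightarrow> n - t + 1 \<le> card {p \<in> N. p \<notin> b1 \<or> p \<notin> b2}"
    proof -
      fix b1 b2 assume b: "b1 \<in> B" "b2 \<in> B" "b1 \<noteq> b2"
      have "{p \<in> N. p \<notin> b1 \<or> p \<notin> b2} = N - (b1 \<inter> b2)" by auto
      moreover have "b1 \<inter> b2 \<subseteq> N" using Bs b by auto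
      moreover have "finite (b1 \<inter> b2)" using fb[OF b(1)] by simp
      ultimately have "card {p \<in> N. p \<notin> b1 \<or> p \<notin> b2} = n - card (b1 \<inter> b2)"
        using card_Diff_subset cN by metis
      then show "n - t + 1 \<le> card {p \<in> N. p \<notin> b1 \<or> p \<notin> b2}" using int_lt[OF b] assms(2,3) by simp
    qed
    show "0 < n - t + 1" by simp
    show "finite B" by (rule fB)
  qed
  have e1: "\<exists>C. is_code n k (2*k - t + 1) (Suc r) (steiner_size t k n) C" using code1 ss by auto
  have e2: "\<exists>C. is_code n (n - k) (n - t + 1) (Suc (card B - r)) (steiner_size t k n) C" using code2 ss by auto
  have l1: "q0' t k n \<le> Suc r" unfolding q0'_def using e1 by (rule Least_le)
  have l2: "q0'' t k n \<le> Suc (card B - r)" unfolding q0''_def using e2 by (rule Least_le)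
  have rB: "r \<le> card B"
  proof -
    have "N \<noteq> {}" using cN assms by auto
    then obtain x where x: "x \<in> N" by blast
    have "card {b\<in>B. x \<in> b} \<le> card B" using fB by (intro card_mono) auto
    then show ?thesis using rx[OF x] by simp
  qed
  have bbr: "real (card B) = real (n choose t) / real (k choose t)"
  proof -
    have "real (card B) * real (k choose t) = real (n choose t)" using hb by (metis of_nat_mult)
    then show ?thesis using kt0 by (simp add: field_simps)
  qed
  have "real (q0'' t k n) \<le> real (card B) - real r + 1" using l2 rB by (simp add: of_nat_diff)
  then have g4: "real (q0'' t k n) \<le> real (n choose t) / real (k choose t)
              - real (n - 1 choose (t - 1)) / real (k - 1 choose (t - 1)) + 1" using bbr rr by simp
  have g2: "real (q0' t k n) \<le> real (n - 1 choose (t - 1)) / real (k - 1 choose (t - 1)) + 1"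
    using l1 rr by simp
  show ?thesis using e1 e2 g2 g4 by blast
qed
end
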